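(* Let $X$ be a set with $|X|\ge 4$. Then $S_X$, as a subgroup of itself, is not rack admissible; that is, there is no rack $(X,* )$ with $\mathrm{LMlt}(X,* )=S_X$.
   Context: A rack is a groupoid $(X,* )$ whose left translations $L_x$ ($y\mapsto x*y$) are bijections and which satisfies $x*(y*z)=(x*y)*(x*z)$. $\mathrm{LMlt}(X,* )=\langle L_x:x\in X\rangle\le S_X$, where $S_X$ is the symmetric group on $X$. A subgroup $G\le S_X$ is rack admissible if there is a rack $(X,* )$ with $\mathrm{LMlt}(X,* )=G$. *)

theory Defs
  imports "HOL-Algebra.Bij" "HOL-Algebra.Generated_Groups"
begin

definition rack :: "'a set \<Rightarrow> ('a \<Rightarrow> 'a \<Rightarrow> 'a) \<Rightarrow> bool" where
  "rack X m \<longleftrightarrow>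
     (\<forall>x\<in>X. \<forall>y\<in>X. m x y \<in> X) \<and>
     (\<forall>x\<in>X. bij_betw (m x) X X) \<and>
     (\<forall>x\<in>X. \<forall>y\<in>X. \<forall>z\<in>X. m x (m y z) = m (m x y) (m x z))"

text \<open>Left translation L_x as an element of the symmetric group S_X = BijGroup X
(functions are extensional, i.e. undefined outside X).\<close>
definition Ltrans :: "'a set \<Rightarrow> ('a \<Rightarrow> 'a \<Rightarrow> 'a) \<Rightarrow> 'a \<Rightarrow> ('a \<Rightarrow> 'a)" where
  "Ltrans X m x = restrict (m x) X"

definition LMlt :: "'a set \<Rightarrow> ('a \<Rightarrow> 'a \<Rightarrow> 'a) \<Rightarrow> ('a \<Rightarrow> 'a) set" where
  "LMlt X m = generate (BijGroup X) (Ltrans X m ` X)"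

end

theory Submission
  imports Defs
begin

lemma rack_closed: "rack X m \<Longrightarrow> x \<in> X \<Longrightarrow> y \<in> X \<Longrightarrow> m x y \<in> X"
  unfolding rack_def by blast
lemma rack_bij: "rack X m \<Longrightarrow> x \<in> X \<Longrightarrow> bij_betw (m x) X X"
  unfolding rack_def by blast
lemma rack_dist: "rack X m \<Longrightarrow> x \<in> X \<Longrightarrow> y \<in> X \<Longrightarrow> z \<in> X \<Longrightarrow> m x (m y z) = m (m x y) (m x z)"
  unfolding rack_def by blast

definition isaut :: "'a set \<Rightarrow> ('a \<Rightarrow> 'a \<Rightarrow> 'a) \<Rightarrow> ('a \<Rightarrow> 'a) \<Rightarrow> bool" where
  "isaut X m g \<longleftrightarrow> g \<in> Bij X \<and> (\<forall>x\<in>X. \<forall>y\<in>X. g (m x y) = m (g x) (g y))"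

lemma Ltrans_Bij:
  assumes r: "rack X m" and z: "z \<in> X"
  shows "Ltrans X m z \<in> Bij X"
proof -
  have b: "bij_betw (m z) X X" using r z unfolding rack_def by blast
  have "bij_betw (restrict (m z) X) X X"
    using b bij_betw_cong[of X "restrict (m z) X" "m z" X] by simp
  then show ?thesis unfolding Bij_def Ltrans_def by simp
qed

lemma aut_one:
  assumes r: "rack X m"
  shows "isaut X m (\<lambda>x\<in>X. x)"
  unfolding isaut_def
proof
  show "(\<lambda>x\<in>X. x) \<in> Bij X" by (rule id_Bij)
  show "\<forall>x\<in>X. \<forall>y\<in>X. (\<lambda>x\<in>X. x) (m x y) = m ((\<lambda>x\<in>X. x) x) ((\<lambda>x\<in>X. x) y)"
  proof (intro ballI)
    fix x y assume "x \<in> X" "y \<in> X"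
    then show "(\<lambda>x\<in>X. x) (m x y) = m ((\<lambda>x\<in>X. x) x) ((\<lambda>x\<in>X. x) y)"
      using rack_closed[OF r, of x y] by (simp only: restrict_apply') 
  qed
qed

lemma aut_L:
  assumes r: "rack X m" and z: "z \<in> X"
  shows "isaut X m (Ltrans X m z)"
  unfolding isaut_def
proof
  show "Ltrans X m z \<in> Bij X" by (rule Ltrans_Bij[OF r z])
  show "\<forall>x\<in>X. \<forall>y\<in>X. Ltrans X m z (m x y) = m (Ltrans X m z x) (Ltrans X m z y)"
  proof (intro ballI)
    fix x y assume x: "x \<in> X" and y: "y \<in> X"
    have "Ltrans X m z (m x y) = m z (m x y)"
      using rack_closed[OF r x y] unfolding Ltrans_def by (simp only: restrict_apply')
    also have "\<dots> = m (m z x) (m z y)" by (rule rack_dist[OF r z x y])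
    also have "\<dots> = m (Ltrans X m z x) (Ltrans X m z y)"
      using x y unfolding Ltrans_def by (simp only: restrict_apply')
    finally show "Ltrans X m z (m x y) = m (Ltrans X m z x) (Ltrans X m z y)" .
  qed
qed

lemma aut_inv:
  assumes r: "rack X m" and a: "isaut X m h"
  shows "isaut X m (inv\<^bsub>BijGroup X\<^esub> h)"
proof -
  have hB: "h \<in> Bij X" using a unfolding isaut_def by blast
  have hom: "\<And>x y. x \<in> X \<Longrightarrow> y \<in> X \<Longrightarrow> h (m x y) = m (h x) (h y)"
    using a unfolding isaut_def by blast
  have mX: "m \<in> X \<rightarrow> X \<rightarrow> X" using rack_closed[OF r] by blast
  have e: "inv\<^bsub>BijGroup X\<^esub> h = (\<lambda>x\<in>X. inv_into X h x)" using hB by (rule inv_BijGroup)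
  have B: "(\<lambda>x\<in>X. inv_into X h x) \<in> Bij X" using hB by (rule restrict_inv_into_Bij)
  have H: "\<forall>x\<in>X. \<forall>y\<in>X. (\<lambda>x\<in>X. inv_into X h x) (m x y)
      = m ((\<lambda>x\<in>X. inv_into X h x) x) ((\<lambda>x\<in>X. inv_into X h x) y)"
  proof (intro ballI)
    fix x y assume x: "x \<in> X" and y: "y \<in> X"
    have "(\<lambda>x\<in>X. inv_into X h x) (m x y) = inv_into X h (m x y)"
      using rack_closed[OF r x y] by (simp only: restrict_apply')
    also have "\<dots> = m (inv_into X h x) (inv_into X h y)"
      by (rule Bij_inv_into_lemma[OF hom hB mX x y])
    also have "\<dots> = m ((\<lambda>x\<in>X. inv_into X h x) x) ((\<lambda>x\<in>X. inv_into X h x) y)"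
      using x y by (simp only: restrict_apply')
    finally show "(\<lambda>x\<in>X. inv_into X h x) (m x y)
      = m ((\<lambda>x\<in>X. inv_into X h x) x) ((\<lambda>x\<in>X. inv_into X h x) y)" .
  qed
  show ?thesis unfolding isaut_def e using B H by blast
qed

lemma aut_mult:
  assumes r: "rack X m" and a: "isaut X m h1" and b: "isaut X m h2"
  shows "isaut X m (h1 \<otimes>\<^bsub>BijGroup X\<^esub> h2)"
proof -
  have B1: "h1 \<in> Bij X" and H1: "\<And>x y. x \<in> X \<Longrightarrow> y \<in> X \<Longrightarrow> h1 (m x y) = m (h1 x) (h1 y)"
    using a unfolding isaut_def by blast+
  have B2: "h2 \<in> Bij X" and H2: "\<And>x y. x \<in> X \<Longrightarrow> y \<in> X \<Longrightarrow> h2 (m x y) = m (h2 x) (h2 y)"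
    using b unfolding isaut_def by blast+
  have f2: "\<And>x. x \<in> X \<Longrightarrow> h2 x \<in> X" using Bij_imp_funcset[OF B2] by blast
  have e: "h1 \<otimes>\<^bsub>BijGroup X\<^esub> h2 = compose X h1 h2" using B1 B2 by (simp add: BijGroup_def)
  have C: "compose X h1 h2 \<in> Bij X" using B1 B2 by (rule compose_Bij)
  have H: "\<forall>x\<in>X. \<forall>y\<in>X. compose X h1 h2 (m x y) = m (compose X h1 h2 x) (compose X h1 h2 y)"
  proof (intro ballI)
    fix x y assume x: "x \<in> X" and y: "y \<in> X"
    have "compose X h1 h2 (m x y) = h1 (h2 (m x y))"
      using rack_closed[OF r x y] by (simp add: compose_def)
    also have "\<dots> = h1 (m (h2 x) (h2 y))" using H2[OF x y] by simp
    also have "\<dots> = m (h1 (h2 x)) (h1 (h2 y))" by (rule H1[OF f2[OF x] f2[OF y]])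
    also have "\<dots> = m (compose X h1 h2 x) (compose X h1 h2 y)" using x y by (simp add: compose_def)
    finally show "compose X h1 h2 (m x y) = m (compose X h1 h2 x) (compose X h1 h2 y)" .
  qed
  show ?thesis unfolding isaut_def e using C H by blast
qed

lemma gen_aut:
  assumes r: "rack X m" and g: "g \<in> generate (BijGroup X) (Ltrans X m ` X)"
  shows "isaut X m g"
  using g
proof (induction rule: generate.induct)
  case one
  then show ?case using aut_one[OF r] by (simp add: BijGroup_def restrict_def)
next
  case (incl h)
  then show ?case using aut_L[OF r] by blast
next
  case (inv h)
  then show ?case using aut_L[OF r] aut_inv[OF r] by blast
next
  case (eng h1 h2)
  then show ?case using aut_mult[OF r] by blast
qed

definition sw :: "'a \<Rightarrow> 'a \<Rightarrow> 'a \<Rightarrow> 'a" where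
  "sw z w v = (if v = z then w else if v = w then z else v)"
lemma fourth:
  assumes "infinite X \<or> card X \<ge> 4"
  shows "\<exists>w\<in>X. w \<noteq> a \<and> w \<noteq> b \<and> w \<noteq> c"
proof (rule ccontr)
  assume "\<not> ?thesis"
  then have s: "X \<subseteq> {a,b,c}" by blast
  then have f: "finite X" using finite_subset by blast
  have "card {a,b,c} \<le> 3" by (simp add: card_insert_if)
  then have "card X \<le> 3" using card_mono[OF _ s] by simp
  then show False using assms f by simp
qed
lemma transp_Bij:
  assumes "z \<in> X" "w \<in> X"
  shows "restrict (sw z w) X \<in> Bij X"
proof -
  have i: "inj_on (sw z w) X" by (auto simp: inj_on_def sw_def)
  have s: "sw z w ` X = X"
  proof
    show "sw z w ` X \<subseteq> X" using assms by (auto simp: sw_def)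
    show "X \<subseteq> sw z w ` X"
    proof
      fix v assume v: "v \<in> X"
      have "sw z w (sw z w v) = v" by (simp add: sw_def)
      moreover have "sw z w v \<in> X" using assms v by (simp add: sw_def)
      ultimately show "v \<in> sw z w ` X" by (metis imageI)
    qed
  qed
  have "bij_betw (restrict (sw z w) X) X X"
    using i s by (simp add: bij_betw_def)
  then show ?thesis by (simp add: Bij_def)
qed

theorem corollary3p8:
  fixes X :: "'a set"
  assumes "infinite X \<or> card X \<ge> 4"
  shows "\<not> (\<exists>m. rack X m \<and> LMlt X m = carrier (BijGroup X))"
proof
  assume "\<exists>m. rack X m \<and> LMlt X m = carrier (BijGroup X)"
  then obtain m where r: "rack X m" and L: "LMlt X m = carrier (BijGroup X)" by blast
  have aut: "g (m x y) = m (g x) (g y)" if g: "g \<in> Bij X" and x: "x \<in> X" and y: "y \<in> X" for g x y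
  proof -
    have "g \<in> carrier (BijGroup X)" using g by (simp add: BijGroup_def)
    then have "g \<in> generate (BijGroup X) (Ltrans X m ` X)"
      using L unfolding LMlt_def by simp
    then have "isaut X m g" by (rule gen_aut[OF r])
    then show ?thesis using x y unfolding isaut_def by blast
  qed
  have mX: "\<And>x y. x \<in> X \<Longrightarrow> y \<in> X \<Longrightarrow> m x y \<in> X" using rack_closed[OF r] by blast
  have inj: "\<And>x. x \<in> X \<Longrightarrow> inj_on (m x) X" using rack_bij[OF r] bij_betw_def by blast
  have fix1: "m x y = y" if xy: "x \<in> X" "y \<in> X" "x \<noteq> y" for x y
  proof (rule ccontr)
    assume ne: "m x y \<noteq> y"
    obtain z where z_def: "z = m x y" by blast
    have zX: "z \<in> X" using mX[OF xy(1,2)] z_def by simp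
    have zy: "z \<noteq> y" using ne z_def by simp
    show False
    proof (cases "z = x")
      case False
      obtain w where w: "w \<in> X" "w \<noteq> x" "w \<noteq> y" "w \<noteq> z" using fourth[OF assms] by blast
      have e: "restrict (sw z w) X (m x y) = m (restrict (sw z w) X x) (restrict (sw z w) X y)"
        by (rule aut[OF transp_Bij[OF zX w(1)] xy(1,2)])
      have e1: "restrict (sw z w) X (m x y) = w"
        using zX unfolding z_def[symmetric] by (simp add: sw_def)
      have e2: "restrict (sw z w) X x = x" using xy(1) False w by (simp add: sw_def)
      have e3: "restrict (sw z w) X y = y" using xy(2) zy w by (simp add: sw_def)
      have "w = z" using e e1 e2 e3 z_def by simp
      then show False using w(4) by simp
    next
      case True
      obtain w where w: "w \<in> X" "w \<noteq> x" "w \<noteq> y" using fourth[OF assms] by blast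
      have e: "restrict (sw y w) X (m x y) = m (restrict (sw y w) X x) (restrict (sw y w) X y)"
        by (rule aut[OF transp_Bij[OF xy(2) w(1)] xy(1,2)])
      have e1: "restrict (sw y w) X (m x y) = x"
        using True xy(1) w(2) xy(3) unfolding z_def[symmetric] by (simp add: sw_def)
      have e2: "restrict (sw y w) X x = x" using xy w by (simp add: sw_def)
      have e3: "restrict (sw y w) X y = w" using xy(2) by (simp add: sw_def)
      have "m x w = x" using e e1 e2 e3 by simp
      then have "m x w = m x y" using True z_def by simp
      then have "w = y" using inj_onD[OF inj[OF xy(1)] _ w(1) xy(2)] by blast
      then show False using w(3) by simp
    qed
  qed
  obtain a b where ab: "a \<in> X" "b \<in> X" "a \<noteq> b"
  proof -
    obtain a where a: "a \<in> X" using fourth[OF assms] by blast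
    obtain b where "b \<in> X" "b \<noteq> a" using fourth[OF assms] by blast
    then show ?thesis using that a by blast
  qed
  have fix2: "m x x = x" if x: "x \<in> X" for x
  proof (rule ccontr)
    assume ne: "m x x \<noteq> x"
    have "m x (m x x) = m x x" using fix1[OF x mX[OF x x]] ne by simp
    then have "m x x = x" using inj_onD[OF inj[OF x] _ mX[OF x x] x] by blast
    then show False using ne by simp
  qed
  have Lone: "Ltrans X m x = \<one>\<^bsub>BijGroup X\<^esub>" if x: "x \<in> X" for x
  proof -
    have "Ltrans X m x = (\<lambda>y\<in>X. y)"
    proof (rule ext)
      fix y show "Ltrans X m x y = (\<lambda>y\<in>X. y) y"
      proof (cases "y \<in> X")
        case True
        then have "m x y = y" using fix1[OF x True] fix2[OF x] by (cases "x = y") auto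
        then show ?thesis using True unfolding Ltrans_def by simp
      next
        case False
        then show ?thesis unfolding Ltrans_def by simp
      qed
    qed
    then show ?thesis by (simp add: BijGroup_def)
  qed
  interpret G: group "BijGroup X" by (rule group_BijGroup)
  have "Ltrans X m ` X \<subseteq> {\<one>\<^bsub>BijGroup X\<^esub>}" using Lone by blast
  then have "LMlt X m \<subseteq> {\<one>\<^bsub>BijGroup X\<^esub>}"
    unfolding LMlt_def by (intro G.generate_subgroup_incl G.triv_subgroup)
  moreover have "restrict (sw a b) X \<in> carrier (BijGroup X)"
    using transp_Bij[OF ab(1,2)] by (simp add: BijGroup_def)
  moreover have "restrict (sw a b) X \<noteq> \<one>\<^bsub>BijGroup X\<^esub>"
  proof
    assume "restrict (sw a b) X = \<one>\<^bsub>BijGroup X\<^esub>"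
    then have "restrict (sw a b) X a = \<one>\<^bsub>BijGroup X\<^esub> a" by simp
    then show False using ab by (simp add: BijGroup_def sw_def)
  qed
  ultimately show False using L by blast
qed

end
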